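(* Let $I\subset\mathbb{R}$ be an open interval, $s_0\in I$, and let $(\kappa_1,\kappa_2):I\to\mathbb{R}^2$ be continuous with an isolated zero at $s_0$, i.e. $(\kappa_1(s_0),\kappa_2(s_0))=(0,0)$ and $(\kappa_1(s),\kappa_2(s))\neq(0,0)$ for $s\neq s_0$ in $I$. Then the following are equivalent: (i) there exist a neighborhood $D\subset I$ of $s_0$ and continuous functions $\tilde r,\tilde\theta:D\to\mathbb{R}$ with $(\tilde r(s)\cos\tilde\theta(s),\,\tilde r(s)\sin\tilde\theta(s))=(\kappa_1(s),\kappa_2(s))$ for all $s\in D$; (ii) both $\theta^+$ and $\theta^-$ (defined in the context) exist and $\theta^+=\theta^-$.
   Context: Define $\hat\theta:\mathbb{R}^2\setminus\{(0,0)\}\to(-\tfrac{\pi}{2},\tfrac{\pi}{2}]$ by $\hat\theta(x,y)=\tan^{-1}(y/x)$ if $x\neq0$ and $\hat\theta(0,y)=\tfrac{\pi}{2}$ for $y\neq 0$ (so $\hat\theta$ is the angle of the line through the origin and $(x,y)$, taken in $(-\pi/2,\pi/2]$). Let $R(x,y)=\big(\tfrac{\sqrt2}{2}(x-y),\,\tfrac{\sqrt2}{2}(x+y)\big)$ be rotation by $\pi/4$. Set $\hat\theta^+:=\lim_{s\to s_0^+}\hat\theta(\kappa_1(s),\kappa_2(s))$ and $\hat\theta^+_{\pi/2}:=\lim_{s\to s_0^+}\hat\theta\big(R(\kappa_1(s),\kappa_2(s))\big)$ (these limits may fail to exist). Define $\theta^+:=\hat\theta^+$ if $\hat\theta^+$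 exists and $-\tfrac{\pi}{2}<\hat\theta^+<\tfrac{\pi}{2}$; $\theta^+:=\tfrac{\pi}{2}$ if $\hat\theta^+_{\pi/2}$ exists and equals $-\tfrac{\pi}{4}$; and $\theta^+$ is undefined otherwise. Define $\hat\theta^-$, $\hat\theta^-_{\pi/2}$, $\theta^-$ in the same way with $s\to s_0^-$ in place of $s\to s_0^+$. *)

theory Defs
  imports "HOL-Analysis.Analysis"
begin

text \<open>Angle of the line through the origin and (x,y), in (-pi/2, pi/2].
  The value at (0,0) is irrelevant (never used in the statement).\<close>
definition theta_hat :: "real \<Rightarrow> real \<Rightarrow> real" where
  "theta_hat x y = (if x = 0 then pi / 2 else arctan (y / x))"

definition rot :: "real \<times> real \<Rightarrow> real \<times> real" where
  "rot p = (sqrt 2 / 2 * (fst p - snd p), sqrt 2 / 2 * (fst p + snd p))"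

text \<open>theta_one_sided F k1 k2 t: the one-sided angle (theta^+ for F = at_right s0,
  theta^- for F = at_left s0) exists and equals t.\<close>
definition theta_one_sided ::
  "real filter \<Rightarrow> (real \<Rightarrow> real) \<Rightarrow> (real \<Rightarrow> real) \<Rightarrow> real \<Rightarrow> bool" where
  "theta_one_sided F k1 k2 t \<longleftrightarrow>
     ((((\<lambda>s. theta_hat (k1 s) (k2 s)) \<longlongrightarrow> t) F \<and> - (pi / 2) < t \<and> t < pi / 2)
      \<or> (t = pi / 2 \<and>
         ((\<lambda>s. case_prod theta_hat (rot (k1 s, k2 s))) \<longlongrightarrow> - (pi / 4)) F))"

end

theory Submission
  imports Defs
begin

lemma arg_sq_polar:
  assumes "c > 0" "- (pi/2) < a" "a < pi/2" "z = of_real c * cis a"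
  shows "Arg (z^2) = 2*a"
proof -
  have "z^2 = of_real (c^2) * cis (2*a)"
  proof -
    have "(cis a)^2 = cis (a + a)" by (simp only: power2_eq_square cis_mult)
    then have "(cis a)^2 = cis (2*a)" by (simp only: mult_2)
    then show ?thesis using assms(4) by (simp only: power_mult_distrib of_real_power)
  qed
  then show ?thesis using assms
    by (intro Arg_unique[of "c^2"]) (auto simp: cis_conv_exp)
qed

lemma th_arg:
  assumes "(x,y) \<noteq> (0::real,0::real)"
  shows "theta_hat x y = Arg ((Complex x y)^2) / 2"
proof (cases "x = 0")
  case True
  then have "y \<noteq> 0" using assms by auto
  have "(Complex x y)^2 = of_real (- (y^2))" using True
    by (simp add: power2_eq_square complex_eq_iff)
  moreover have "- (y^2) < 0" using \<open>y\<noteq>0\<close> by simp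
  ultimately have "Arg ((Complex x y)^2) = pi" using Arg_of_real[of "- (y^2)"] by presburger
  then show ?thesis using True by (simp add: theta_hat_def)
next
  case False
  define a where "a = arctan (y/x)"
  have ca: "cos a > 0" unfolding a_def cos_arctan by (simp add: add_pos_nonneg)
  have ta: "sin a / cos a = y / x" unfolding a_def by (metis tan_arctan tan_def)
  have z: "Complex x y = of_real x * (of_real (1 / cos a) * cis a)"
    using ca ta False by (simp add: complex_eq_iff field_simps)
  have "Arg ((Complex x y)^2) = Arg ((of_real (\<bar>x\<bar> / cos a) * cis a)^2)"
    unfolding z using False
    by (cases "x > 0") (auto simp: power_mult_distrib power2_eq_square)
  also have "\<dots> = 2 * a"
    by (rule arg_sq_polar[of "\<bar>x\<bar> / cos a"]) (use ca False arctan_bounded[of "y/x"] in \<open>auto simp: a_def\<close>)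
  finally show ?thesis using False by (simp add: theta_hat_def a_def)
qed

lemma th_rot:
  assumes "(x,y) \<noteq> (0::real,0::real)"
  shows "case_prod theta_hat (rot (x,y)) = Arg (\<i> * (Complex x y)^2) / 2"
proof -
  define w where "w = Complex (sqrt 2 / 2) (sqrt 2 / 2)"
  have w2: "w^2 = \<i>" unfolding w_def by (simp add: power2_eq_square complex_eq_iff)
  obtain a b where ab: "rot (x,y) = (a,b)" by fastforce
  have a: "a = sqrt 2/2*(x-y)" and b: "b = sqrt 2/2*(x+y)" using ab by (auto simp: rot_def)
  have cab: "Complex a b = Complex x y * w"
    unfolding a b by (simp add: w_def complex_eq_iff field_simps)
  have "Complex x y \<noteq> 0" using assms by (auto simp: complex_eq_iff)
  moreover have "w \<noteq> 0" using w2 by auto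
  ultimately have "Complex a b \<noteq> 0" using cab by simp
  then have "(a,b) \<noteq> (0,0)" by (auto simp: complex_eq_iff)
  then have "theta_hat a b = Arg ((Complex a b)^2)/2" by (rule th_arg)
  also have "(Complex a b)^2 = \<i> * (Complex x y)^2" unfolding cab power_mult_distrib w2 by simp
  finally show ?thesis using ab by simp
qed

lemma Arg_sgn: "Arg (sgn w) = Arg w"
proof (cases "w = 0")
  case False
  have "sgn w = w / of_real (norm w)" by (simp add: sgn_div_norm divide_inverse_commute scaleR_conv_of_real)
  then show ?thesis using False by simp
qed simp

lemma sgn_i_mult: "sgn (\<i> * w) = \<i> * sgn w"
  by (simp add: sgn_mult sgn_eq norm_mult)

lemma side_a:
  assumes ev: "eventually (\<lambda>s. (k1 s, k2 s) \<noteq> (0,0)) F"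
    and th: "theta_one_sided F k1 k2 t"
  shows "((\<lambda>s. sgn ((Complex (k1 s) (k2 s))^2)) \<longlongrightarrow> cis (2*t)) F"
proof -
  from th consider (A) "((\<lambda>s. theta_hat (k1 s) (k2 s)) \<longlongrightarrow> t) F"
    | (B) "t = pi/2" "((\<lambda>s. case_prod theta_hat (rot (k1 s, k2 s))) \<longlongrightarrow> -(pi/4)) F"
    unfolding theta_one_sided_def by blast
  then show ?thesis
  proof cases
    case A
    have "((\<lambda>s. 2 * theta_hat (k1 s) (k2 s)) \<longlongrightarrow> 2*t) F" using A by (intro tendsto_intros)
    then have "((\<lambda>s. cis (2 * theta_hat (k1 s) (k2 s))) \<longlongrightarrow> cis (2*t)) F" by (rule tendsto_cis)
    moreover have "eventually (\<lambda>s. cis (2 * theta_hat (k1 s) (k2 s)) = sgn ((Complex (k1 s) (k2 s))^2)) F"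
      using ev
    proof eventually_elim
      case (elim s)
      then have "Complex (k1 s) (k2 s) \<noteq> 0" by (auto simp: complex_eq_iff)
      then have w: "(Complex (k1 s) (k2 s))^2 \<noteq> 0" by simp
      have "2 * theta_hat (k1 s) (k2 s) = Arg ((Complex (k1 s) (k2 s))^2)" using th_arg[OF elim] by simp
      then show ?case using cis_Arg[OF w] by simp
    qed
    ultimately show ?thesis by (rule Lim_transform_eventually)
  next
    case B
    have "((\<lambda>s. 2 * case_prod theta_hat (rot (k1 s, k2 s))) \<longlongrightarrow> 2*(-(pi/4))) F" using B by (intro tendsto_intros)
    then have L: "((\<lambda>s. cis (2 * case_prod theta_hat (rot (k1 s, k2 s)))) \<longlongrightarrow> cis (2*(-(pi/4)))) F" by (rule tendsto_cis)
    have E: "eventually (\<lambda>s. cis (2 * case_prod theta_hat (rot (k1 s, k2 s))) = \<i> * sgn ((Complex (k1 s) (k2 s))^2)) F"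
      using ev
    proof eventually_elim
      case (elim s)
      then have "Complex (k1 s) (k2 s) \<noteq> 0" by (auto simp: complex_eq_iff)
      then have "\<i> * (Complex (k1 s) (k2 s))^2 \<noteq> 0" by simp
      have "2 * case_prod theta_hat (rot (k1 s, k2 s)) = Arg (\<i> * (Complex (k1 s) (k2 s))^2)" using th_rot[OF elim] by simp
      then show ?case using cis_Arg[OF \<open>\<i> * (Complex (k1 s) (k2 s))^2 \<noteq> 0\<close>] sgn_i_mult by simp
    qed
    have C: "cis (2*(-(pi/4))) = - \<i>" by (simp add: complex_eq_iff)
    have "((\<lambda>s. \<i> * sgn ((Complex (k1 s) (k2 s))^2)) \<longlongrightarrow> - \<i>) F"
      using Lim_transform_eventually[OF L E] unfolding C .
    then have "((\<lambda>s. (- \<i>) * (\<i> * sgn ((Complex (k1 s) (k2 s))^2))) \<longlongrightarrow> (- \<i>) * (- \<i>)) F"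
      by (intro tendsto_intros)
    moreover have "cis (2*t) = (- \<i>) * (- \<i>)" using B(1) by (simp add: complex_eq_iff mult.commute)
    ultimately show ?thesis by simp
  qed
qed

lemma side_b:
  assumes ev: "eventually (\<lambda>s. (k1 s, k2 s) \<noteq> (0,0)) F"
    and lim: "((\<lambda>s. sgn ((Complex (k1 s) (k2 s))^2)) \<longlongrightarrow> c) F"
    and nc: "norm c = 1"
  shows "theta_one_sided F k1 k2 (if c = -1 then pi/2 else Arg c / 2)"
proof (cases "c = -1")
  case False
  have cnp: "c \<notin> \<real>\<^sub>\<le>\<^sub>0"
  proof
    assume "c \<in> \<real>\<^sub>\<le>\<^sub>0"
    then have "Im c = 0" "Re c \<le> 0" by (auto simp: complex_nonpos_Reals_iff)
    with nc have "c = -1" by (auto simp: complex_eq_iff cmod_def)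
    with False show False by simp
  qed
  have "((\<lambda>s. Arg (sgn ((Complex (k1 s) (k2 s))^2))) \<longlongrightarrow> Arg c) F"
    by (rule isCont_tendsto_compose[OF continuous_at_Arg[OF cnp] lim])
  then have "((\<lambda>s. Arg (sgn ((Complex (k1 s) (k2 s))^2)) / 2) \<longlongrightarrow> Arg c / 2) F"
    by (rule tendsto_divide[OF _ tendsto_const]) simp_all
  moreover have "eventually (\<lambda>s. Arg (sgn ((Complex (k1 s) (k2 s))^2)) / 2 = theta_hat (k1 s) (k2 s)) F"
    using ev by eventually_elim (simp add: th_arg Arg_sgn)
  ultimately have L: "((\<lambda>s. theta_hat (k1 s) (k2 s)) \<longlongrightarrow> Arg c / 2) F"
    by (rule Lim_transform_eventually)
  have "Arg c \<noteq> pi"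
  proof
    assume "Arg c = pi"
    then have "Im c = 0" "Re c < 0" by (auto simp: Arg_eq_pi)
    with nc have "c = -1" by (auto simp: complex_eq_iff cmod_def)
    with False show False by simp
  qed
  then have "- (pi/2) < Arg c / 2" "Arg c / 2 < pi / 2"
    using mpi_less_Arg[of c] Arg_le_pi[of c] by auto
  then show ?thesis using L False unfolding theta_one_sided_def by auto
next
  case True
  have "((\<lambda>s. \<i> * sgn ((Complex (k1 s) (k2 s))^2)) \<longlongrightarrow> \<i> * c) F"
    using lim by (intro tendsto_intros)
  then have lim2: "((\<lambda>s. \<i> * sgn ((Complex (k1 s) (k2 s))^2)) \<longlongrightarrow> - \<i>) F"
    using True by simp
  have cnp: "- \<i> \<notin> \<real>\<^sub>\<le>\<^sub>0" by (auto simp: complex_nonpos_Reals_iff)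
  have A: "((\<lambda>s. Arg (\<i> * sgn ((Complex (k1 s) (k2 s))^2))) \<longlongrightarrow> Arg (- \<i>)) F"
    by (rule isCont_tendsto_compose[OF continuous_at_Arg[OF cnp] lim2])
  have "cis (- (pi/2)) = - \<i>" by (simp add: complex_eq_iff)
  then have "Arg (- \<i>) = - (pi/2)"
    using Arg_cis[of "- (pi/2)"] pi_gt_zero by auto
  with A have "((\<lambda>s. Arg (\<i> * sgn ((Complex (k1 s) (k2 s))^2))) \<longlongrightarrow> - (pi/2)) F" by simp
  then have L: "((\<lambda>s. Arg (\<i> * sgn ((Complex (k1 s) (k2 s))^2)) / 2) \<longlongrightarrow> - (pi/2) / 2) F"
    by (rule tendsto_divide[OF _ tendsto_const]) simp
  have E: "eventually (\<lambda>s. Arg (\<i> * sgn ((Complex (k1 s) (k2 s))^2)) / 2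
       = case_prod theta_hat (rot (k1 s, k2 s))) F"
    using ev by eventually_elim (simp add: th_rot Arg_sgn flip: sgn_i_mult)
  have "- (pi/2) / 2 = - (pi/4)" by simp
  then have "((\<lambda>s. case_prod theta_hat (rot (k1 s, k2 s))) \<longlongrightarrow> - (pi/4)) F"
    using Lim_transform_eventually[OF L E] by simp
  then show ?thesis using True unfolding theta_one_sided_def by auto
qed

lemma near1_notnp:
  fixes z :: complex
  assumes "norm (z - 1) < 1" shows "z \<notin> \<real>\<^sub>\<le>\<^sub>0"
proof
  assume "z \<in> \<real>\<^sub>\<le>\<^sub>0"
  then obtain r where r: "z = of_real r" "r \<le> 0" by (auto elim: nonpos_Reals_cases)
  then have "norm (z - 1) = norm (of_real (r - 1) :: complex)" by simp
  also have "\<dots> = 1 - r" using r(2) by (simp only: norm_of_real)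
  finally show False using assms r(2) by simp
qed

lemma sq_real_nonneg:
  fixes q :: complex
  assumes "q^2 = of_real a" "a \<ge> 0"
  shows "q = of_real (Re q)"
proof -
  have i: "2 * Re q * Im q = 0" and r: "(Re q)^2 - (Im q)^2 = a"
    using assms(1) by (auto simp: complex_eq_iff power2_eq_square)
  have "Im q = 0"
  proof (rule ccontr)
    assume "Im q \<noteq> 0"
    then have "Re q = 0" using i by simp
    then have "0 \<le> - ((Im q)^2)" using r assms(2) by simp
    moreover have "(Im q)^2 > 0" using \<open>Im q \<noteq> 0\<close> by simp
    ultimately show False by linarith
  qed
  then show ?thesis by (simp add: complex_eq_iff)
qed

lemma norm_limit_1:
  fixes u :: "real \<Rightarrow> complex"
  assumes "(u \<longlongrightarrow> c) (at s0)" "eventually (\<lambda>s. norm (u s) = 1) (at s0)"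
  shows "norm c = 1"
proof -
  have "((\<lambda>s. norm (u s)) \<longlongrightarrow> norm c) (at s0)" using assms(1) by (rule tendsto_norm)
  moreover have "((\<lambda>s. norm (u s)) \<longlongrightarrow> 1) (at s0)"
    using tendsto_cong[OF assms(2)] by simp
  ultimately show ?thesis using tendsto_unique[OF at_neq_bot] by blast
qed

lemma mult_inv_sgn:
  fixes z :: complex
  assumes "z \<noteq> 0" shows "z * inverse (sgn z) = of_real (norm z)"
  using assms by (simp add: sgn_eq)

theorem lemma1:
  fixes I :: "real set" and s0 :: real and k1 k2 :: "real \<Rightarrow> real"
  assumes "open I" and "is_interval I" and "s0 \<in> I"
    and "continuous_on I k1" and "continuous_on I k2"
    and "k1 s0 = 0" and "k2 s0 = 0"
    and "\<And>s. s \<in> I \<Longrightarrow> s \<noteq> s0 \<Longrightarrow> (k1 s, k2 s) \<noteq> (0, 0)"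
  shows "(\<exists>D r th. open D \<and> s0 \<in> D \<and> D \<subseteq> I \<and> continuous_on D r \<and> continuous_on D th \<and>
            (\<forall>s\<in>D. (r s * cos (th s), r s * sin (th s)) = (k1 s, k2 s)))
         \<longleftrightarrow> (\<exists>t. theta_one_sided (at_right s0) k1 k2 t \<and> theta_one_sided (at_left s0) k1 k2 t)"
proof -
  define f where "f s = Complex (k1 s) (k2 s)" for s
  define u where "u s = sgn ((f s)^2)" for s
  obtain e where e: "e > 0" "ball s0 e \<subseteq> I" using assms(1,3) open_contains_ball by blast
  have nz: "f s \<noteq> 0" if "s \<in> I" "s \<noteq> s0" for s
    using assms(8)[OF that] by (auto simp: f_def complex_eq_iff)
  have f0: "f s0 = 0" using assms(6,7) by (simp add: f_def complex_eq_iff)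
  have evAt: "eventually (\<lambda>s. (k1 s, k2 s) \<noteq> (0,0)) (at s0)"
    unfolding eventually_at using e assms(8) by (auto simp: dist_commute subset_iff intro!: exI[of _ e])
  have evN: "eventually (\<lambda>s. norm (u s) = 1) (at s0)"
    using evAt
  proof eventually_elim
    case (elim s)
    then have "f s \<noteq> 0" by (auto simp: f_def complex_eq_iff)
    then show ?case by (simp add: u_def norm_sgn)
  qed
  have ctsf: "isCont f x" if "x \<in> I" for x
  proof -
    have "isCont k1 x" "isCont k2 x" using assms(1,4,5) that continuous_on_eq_continuous_at by blast+
    then show ?thesis unfolding f_def Complex_eq by (intro continuous_intros)
  qed
  have M: "(\<exists>t. theta_one_sided (at_right s0) k1 k2 t \<and> theta_one_sided (at_left s0) k1 k2 t)
           \<longleftrightarrow> (\<exists>c. (u \<longlongrightarrow> c) (at s0))"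
  proof
    assume "\<exists>t. theta_one_sided (at_right s0) k1 k2 t \<and> theta_one_sided (at_left s0) k1 k2 t"
    then obtain t where t: "theta_one_sided (at_right s0) k1 k2 t" "theta_one_sided (at_left s0) k1 k2 t"
      by blast
    have "(u \<longlongrightarrow> cis (2*t)) (at_right s0)" "(u \<longlongrightarrow> cis (2*t)) (at_left s0)"
      using side_a[OF _ t(1)] side_a[OF _ t(2)] evAt
      unfolding u_def f_def eventually_at_split by auto
    then show "\<exists>c. (u \<longlongrightarrow> c) (at s0)" using filterlim_split_at by blast
  next
    assume "\<exists>c. (u \<longlongrightarrow> c) (at s0)"
    then obtain c where c: "(u \<longlongrightarrow> c) (at s0)" by blast
    have nc: "norm c = 1" using norm_limit_1[OF c evN] .
    have "(u \<longlongrightarrow> c) (at_right s0)" "(u \<longlongrightarrow> c) (at_left s0)"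
      using c filterlim_at_split by blast+
    then show "\<exists>t. theta_one_sided (at_right s0) k1 k2 t \<and> theta_one_sided (at_left s0) k1 k2 t"
      using side_b[OF _ _ nc] evAt unfolding u_def f_def eventually_at_split by blast
  qed
  have N: "(\<exists>D r th. open D \<and> s0 \<in> D \<and> D \<subseteq> I \<and> continuous_on D r \<and> continuous_on D th \<and>
            (\<forall>s\<in>D. (r s * cos (th s), r s * sin (th s)) = (k1 s, k2 s)))
         \<longleftrightarrow> (\<exists>c. (u \<longlongrightarrow> c) (at s0))"
  proof
    assume "\<exists>D r th. open D \<and> s0 \<in> D \<and> D \<subseteq> I \<and> continuous_on D r \<and> continuous_on D th \<and>
            (\<forall>s\<in>D. (r s * cos (th s), r s * sin (th s)) = (k1 s, k2 s))"
    then obtain D r th where D: "open D" "s0 \<in> D" "D \<subseteq> I" "continuous_on D r" "continuous_on D th"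
      and eq: "\<And>s. s \<in> D \<Longrightarrow> (r s * cos (th s), r s * sin (th s)) = (k1 s, k2 s)" by blast
    have fD: "f s = of_real (r s) * cis (th s)" if "s \<in> D" for s
      using eq[OF that] by (simp add: f_def complex_eq_iff)
    have evD: "eventually (\<lambda>s. s \<in> D \<and> s \<noteq> s0) (at s0)"
      using eventually_nhds_in_open[OF D(1,2)] unfolding eventually_at_filter
      by eventually_elim auto
    have evE: "eventually (\<lambda>s. cis (2 * th s) = u s) (at s0)"
      using evD
    proof eventually_elim
      case (elim s)
      then have "f s \<noteq> 0" using nz D(3) by auto
      then have rs: "r s \<noteq> 0" using fD[of s] elim by auto
      have "(f s)^2 = of_real ((r s)^2) * cis (2 * th s)"
      proof -
        have "(cis (th s))^2 = cis (th s + th s)" by (simp only: power2_eq_square cis_mult)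
        moreover have "(f s)^2 = (of_real (r s))^2 * (cis (th s))^2" using fD[of s] elim by (simp only: power_mult_distrib)
        ultimately show ?thesis by (simp only: mult_2 of_real_power)
      qed
      moreover have "sgn (of_real ((r s)^2) :: complex) = 1" using rs by (simp only: sgn_of_real) (cases "r s > 0"; simp)
      moreover have "sgn (cis (2 * th s)) = cis (2 * th s)" by (simp add: sgn_div_norm)
      ultimately show ?case by (simp add: u_def sgn_mult)
    qed
    have "isCont th s0" using D(1,2,5) continuous_on_eq_continuous_at by blast
    then have "(th \<longlongrightarrow> th s0) (at s0)" by (simp add: isCont_def)
    then have "((\<lambda>s. cis (2 * th s)) \<longlongrightarrow> cis (2 * th s0)) (at s0)"
      by (intro tendsto_cis tendsto_mult tendsto_const)
    then show "\<exists>c. (u \<longlongrightarrow> c) (at s0)" using Lim_transform_eventually[OF _ evE] by blast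
  next
    assume "\<exists>c. (u \<longlongrightarrow> c) (at s0)"
    then show "\<exists>D r th. open D \<and> s0 \<in> D \<and> D \<subseteq> I \<and> continuous_on D r \<and> continuous_on D th \<and>
            (\<forall>s\<in>D. (r s * cos (th s), r s * sin (th s)) = (k1 s, k2 s))"
    proof -
      from \<open>\<exists>c. (u \<longlongrightarrow> c) (at s0)\<close> obtain c where c: "(u \<longlongrightarrow> c) (at s0)" by blast
      have nc: "norm c = 1" using norm_limit_1[OF c evN] .
      have c0: "c \<noteq> 0" using nc by auto
      have "eventually (\<lambda>s. dist (u s) c < 1) (at s0)" using tendstoD[OF c] by simp
      then obtain d where d: "d > 0" "\<And>x. x \<noteq> s0 \<Longrightarrow> dist x s0 < d \<Longrightarrow> dist (u x) c < 1"
        unfolding eventually_at by auto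
      define D where "D = ball s0 (min d e)"
      have DI: "D \<subseteq> I" using e by (auto simp: D_def)
      have oD: "open D" "s0 \<in> D" using d e by (auto simp: D_def)
      have gd: "dist (u s) c < 1" if "s \<in> D" "s \<noteq> s0" for s
        using d(2)[of s] that by (auto simp: D_def dist_commute)
      have fnz: "f s \<noteq> 0" if "s \<in> D" "s \<noteq> s0" for s using nz that DI by auto
      have unz: "norm (u s) = 1" if "s \<in> D" "s \<noteq> s0" for s
        using fnz[OF that] by (simp add: u_def norm_sgn)
      define \<phi>0 where "\<phi>0 = Arg c / 2"
      define g where "g s = \<phi>0 + Arg (u s / c) / 2" for s
      define \<psi> where "\<psi> s = (if s = s0 then \<phi>0 else g s)" for s
      define r where "r s = Re (f s * cis (- \<psi> s))" for s
      have notnp: "u s / c \<notin> \<real>\<^sub>\<le>\<^sub>0" if "s \<in> D" "s \<noteq> s0" for s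
      proof (rule near1_notnp)
        have "u s / c - 1 = (u s - c) / c" using c0 by (simp add: diff_divide_distrib)
        then have "norm (u s / c - 1) = dist (u s) c" using nc by (simp add: norm_divide dist_norm)
        then show "norm (u s / c - 1) < 1" using gd[OF that] by simp
      qed
      have cisg: "cis (2 * g s) = u s" if "s \<in> D" "s \<noteq> s0" for s
      proof -
        have u0: "u s / c \<noteq> 0" using unz[OF that] c0 by auto
        have "2 * g s = Arg c + Arg (u s / c)" by (simp add: g_def \<phi>0_def)
        then have "cis (2 * g s) = cis (Arg c) * cis (Arg (u s / c))" by (simp add: cis_mult)
        also have "\<dots> = sgn c * sgn (u s / c)" using c0 u0 by (simp add: cis_Arg)
        also have "\<dots> = c * (u s / c)" using nc unz[OF that] by (simp add: sgn_div_norm norm_divide)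
        also have "\<dots> = u s" using c0 by simp
        finally show ?thesis .
      qed
      have rep: "f s = of_real (r s) * cis (\<psi> s)" if "s \<in> D" for s
      proof (cases "s = s0")
        case True
        then show ?thesis using f0 by (simp add: r_def)
      next
        case False
        define q where "q = f s * cis (- \<psi> s)"
        have ps: "\<psi> s = g s" using False by (simp add: \<psi>_def)
        have "(cis (- \<psi> s))^2 = cis (- \<psi> s + - \<psi> s)" by (simp only: power2_eq_square cis_mult)
        also have "- \<psi> s + - \<psi> s = - (2 * g s)" using ps by simp
        also have "cis (- (2 * g s)) = inverse (cis (2 * g s))" by (simp only: cis_inverse)
        also have "\<dots> = inverse (u s)" using cisg[OF that False] by simp
        finally have cq: "(cis (- \<psi> s))^2 = inverse (u s)" .
        have fs2: "(f s)^2 \<noteq> 0" using fnz[OF that False] by simp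
        have "q^2 = (f s)^2 * inverse (sgn ((f s)^2))" unfolding q_def power_mult_distrib cq u_def ..
        also have "\<dots> = of_real (norm ((f s)^2))" using fs2
          by (rule mult_inv_sgn)
        finally have "q = of_real (Re q)" by (rule sq_real_nonneg) simp
        then have "q = of_real (r s)" by (simp add: q_def r_def)
        then have "f s * cis (- \<psi> s) * cis (\<psi> s) = of_real (r s) * cis (\<psi> s)" by (simp add: q_def)
        then show ?thesis by (simp add: mult.assoc cis_mult)
      qed
      have ctsfD: "continuous_on D f" using ctsf DI by (intro continuous_at_imp_continuous_on) auto
      have cg: "isCont g x" if "x \<in> D" "x \<noteq> s0" for x
      proof -
        have "isCont (\<lambda>s. (f s)^2) x" using that DI by (intro continuous_intros ctsf) auto
        then have "isCont u x" unfolding u_def using fnz[OF that] by (intro isCont_sgn) simp_all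
        then have h: "isCont (\<lambda>s. u s / c) x" using c0 by (intro continuous_intros)
        have "isCont (\<lambda>s. Arg (u s / c)) x"
          by (rule isCont_o2[where f="\<lambda>s. u s / c" and g=Arg, OF h continuous_at_Arg[OF notnp[OF that]]])
        then show ?thesis unfolding g_def by (intro continuous_intros) simp_all
      qed
      have cpsi: "isCont \<psi> x" if "x \<in> D" for x
      proof (cases "x = s0")
        case False
        have "eventually (\<lambda>y. y \<in> - {s0}) (nhds x)"
          using False by (intro eventually_nhds_in_open) auto
        then have "eventually (\<lambda>y. \<psi> y = g y) (nhds x)"
          by eventually_elim (simp add: \<psi>_def)
        then show ?thesis using cg[OF that False] isCont_cong by blast
      next
        case True
        have "((\<lambda>s. u s / c) \<longlongrightarrow> c / c) (at s0)" using c c0 by (intro tendsto_intros)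
        then have "((\<lambda>s. u s / c) \<longlongrightarrow> 1) (at s0)" using c0 by simp
        moreover have "(1::complex) \<notin> \<real>\<^sub>\<le>\<^sub>0" by (rule near1_notnp) simp
        ultimately have "((\<lambda>s. Arg (u s / c)) \<longlongrightarrow> Arg 1) (at s0)"
          using isCont_tendsto_compose[OF continuous_at_Arg] by blast
        then have "((\<lambda>s. Arg (u s / c)) \<longlongrightarrow> 0) (at s0)" by simp
        then have "(g \<longlongrightarrow> \<phi>0 + 0 / 2) (at s0)" unfolding g_def
          by (intro tendsto_add tendsto_const tendsto_divide) simp_all
        then have "(g \<longlongrightarrow> \<psi> s0) (at s0)" by (simp add: \<psi>_def)
        moreover have "eventually (\<lambda>s. g s = \<psi> s) (at s0)"
          unfolding eventually_at_filter by (simp add: \<psi>_def)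
        ultimately have "(\<psi> \<longlongrightarrow> \<psi> s0) (at s0)" by (rule Lim_transform_eventually)
        then show ?thesis using True by (simp add: isCont_def)
      qed
      have cpsiD: "continuous_on D \<psi>" using cpsi by (intro continuous_at_imp_continuous_on) auto
      have crD: "continuous_on D r" unfolding r_def using ctsfD cpsiD by (intro continuous_intros)
      have "\<forall>s\<in>D. (r s * cos (\<psi> s), r s * sin (\<psi> s)) = (k1 s, k2 s)"
      proof
        fix s assume "s \<in> D"
        from rep[OF this] show "(r s * cos (\<psi> s), r s * sin (\<psi> s)) = (k1 s, k2 s)"
          by (simp add: f_def complex_eq_iff)
      qed
      then show ?thesis using oD DI crD cpsiD by blast
    qed
  qed
  show ?thesis using M N by blast
qed

end
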